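(* Let $(\mathcal{L},\mathcal{D}(\mathcal{L}))$ be the generator of a $C_0$-contraction semigroup on a Banach space $\mathcal{X}$ and $M\in\mathcal{B}(\mathcal{X})$ a contraction such that $\|M^n-P\|_\infty\le\tilde c\,\delta^n$ for some projection $P$, some $\delta\in(0,1)$, $\tilde c\ge0$ and all $n\in\mathbb{N}$. Assume there is $b\ge0$ such that for all $t\ge0$ $$\|Pe^{t\mathcal{L}}(\mathbf{1}-P)\|_\infty\le tb\quad\text{and}\quad\|(\mathbf{1}-P)e^{t\mathcal{L}}P\|_\infty\le tb.$$ If $(P\mathcal{L}P,\mathcal{D}(\mathcal{L}P))$ is the generator of a $C_0$-semigroup, then for $t\ge0$ there exist a constant $c>0$ and $n_0\in\mathbb{N}$ such that $\tilde\delta:=\tilde c\,\delta^{n_0}<1$ and for all $n\in\mathbb{N}$ and all $x\in\mathcal{D}((\mathcal{L}P)^2)$ $$\Big\|\big(M^{n_0}e^{\frac tn\mathcal{L}}\big)^nx-e^{tP\mathcal{L}P}Px\Big\|\le\frac cn\big(\|x\|+\|\mathcal{L}Px\|+\|(\mathcal{L}P)^2x\|\big)+\tilde\delta^n\|x\|.$$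
   Context: $\mathcal{B}(\mathcal{X})$: bounded operators with operator norm $\|\cdot\|_\infty$; $\mathbf{1}$ the identity; contraction: norm at most $1$; projection: bounded idempotent. A $C_0$-contraction semigroup is a strongly continuous semigroup of contractions, denoted $e^{t\mathcal{L}}$ by its generator. Domains: $\mathcal{D}(\mathcal{L}P)=\{x:Px\in\mathcal{D}(\mathcal{L})\}$, $\mathcal{D}((\mathcal{L}P)^2)=\{x\in\mathcal{D}(\mathcal{L}P):\mathcal{L}Px\in\mathcal{D}(\mathcal{L}P)\}$; $P\mathcal{L}P$ is considered on $\mathcal{D}(\mathcal{L}P)$. *)

theory Defs
  imports "HOL-Analysis.Analysis"
begin

definition blinfun_pow :: "('a::real_normed_vector \<Rightarrow>\<^sub>L 'a) \<Rightarrow> nat \<Rightarrow> ('a \<Rightarrow>\<^sub>L 'a)" where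
  "blinfun_pow A n = ((\<lambda>B. A o\<^sub>L B) ^^ n) id_blinfun"

definition c0_semigroup :: "(real \<Rightarrow> ('a::banach \<Rightarrow>\<^sub>L 'a)) \<Rightarrow> bool" where
  "c0_semigroup T \<longleftrightarrow>
     T 0 = id_blinfun \<and>
     (\<forall>s\<ge>0. \<forall>t\<ge>0. T (s + t) = T s o\<^sub>L T t) \<and>
     (\<forall>x. ((\<lambda>t. blinfun_apply (T t) x) \<longlongrightarrow> x) (at_right 0))"

definition c0_contraction_semigroup :: "(real \<Rightarrow> ('a::banach \<Rightarrow>\<^sub>L 'a)) \<Rightarrow> bool" where
  "c0_contraction_semigroup T \<longleftrightarrow> c0_semigroup T \<and> (\<forall>t\<ge>0. norm (T t) \<le> 1)"

definition is_generator :: "(real \<Rightarrow> ('a::banach \<Rightarrow>\<^sub>L 'a)) \<Rightarrow> ('a \<Rightarrow> 'a) \<Rightarrow> 'a set \<Rightarrow> bool" where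
  "is_generator T L D \<longleftrightarrow>
     D = {x. \<exists>y. ((\<lambda>h. (1 / h) *\<^sub>R (blinfun_apply (T h) x - x)) \<longlongrightarrow> y) (at_right 0)} \<and>
     (\<forall>x\<in>D. ((\<lambda>h. (1 / h) *\<^sub>R (blinfun_apply (T h) x - x)) \<longlongrightarrow> L x) (at_right 0))"

end

theory Submission
  imports Defs
begin


lemma banach_steinhaus:
  fixes F :: "('a::banach \<Rightarrow>\<^sub>L 'b::real_normed_vector) set"
  assumes pb: "\<And>x. \<exists>B. \<forall>f\<in>F. norm (f x) \<le> B"
  shows "\<exists>B. \<forall>f\<in>F. norm f \<le> B"
proof -
  define E where "E k = {x. \<forall>f\<in>F. norm (f x) \<le> real k}" for k :: nat
  have cl: "closed (E k)" for k
  proof -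
    have "E k = (\<Inter>f\<in>F. {x. norm (blinfun_apply f x) \<le> real k})" by (auto simp: E_def)
    moreover have "closed {x. norm (blinfun_apply f x) \<le> real k}" for f
      by (intro closed_Collect_le continuous_intros)
    ultimately show ?thesis by auto
  qed
  have un: "\<Union>(range E) = UNIV"
  proof (auto)
    fix x
    obtain B where "\<forall>f\<in>F. norm (f x) \<le> B" using pb by blast
    moreover obtain k where "B \<le> real k" using real_arch_simple by blast
    ultimately have "x \<in> E k" unfolding E_def by force
    then show "\<exists>k. x \<in> E k" by blast
  qed
  have "\<exists>k. interior (E k) \<noteq> {}"
  proof (rule ccontr)
    assume H: "\<not> (\<exists>k. interior (E k) \<noteq> {})"
    have ie: "closedin euclidean T \<and> euclidean interior_of T = {}" if Tr: "T \<in> range E" for T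
    proof -
      obtain k where Tk: "T = E k" using Tr by blast
      have i0: "interior (E k) = {}" using H by blast
      have c1: "closedin euclidean (E k)" using cl[of k] closed_closedin by blast
      have c2: "euclidean interior_of (E k) = {}" using i0 euclidean_interior_of[of "E k"] by argo
      show ?thesis unfolding Tk using c1 c2 by (rule conjI)
    qed
    have cms: "completely_metrizable_space (euclidean::'a topology) \<or>
        locally_compact_space (euclidean::'a topology) \<and> regular_space (euclidean::'a topology)"
      by (rule disjI1) (rule completely_metrizable_space_euclidean)
    have cnt: "countable (range E)" by simp
    have "euclidean interior_of \<Union>(range E) = {}" by (rule Baire_category_alt[OF cms cnt ie])
    then have "interior (UNIV::'a set) = {}" unfolding un by simp
    then show False by simp
  qed
  then obtain k x0 where "x0 \<in> interior (E k)" by blast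
  then obtain r where r0: "r > 0" "ball x0 r \<subseteq> interior (E k)"
    using open_contains_ball_eq open_interior by blast
  then have r: "r > 0" "ball x0 r \<subseteq> E k" using interior_subset by blast+
  have x0E: "x0 \<in> E k" using r(2) centre_in_ball[of x0 r] r(1) by blast
  have small: "norm (f y) \<le> 2 * real k" if "f \<in> F" "norm y < r" for f y
  proof -
    have "x0 + y \<in> ball x0 r" using that(2) by (simp add: dist_norm)
    then have "x0 + y \<in> E k" using r(2) by blast
    then have "norm (f (x0 + y)) \<le> real k" using that unfolding E_def by auto
    moreover have "norm (f x0) \<le> real k" using x0E that unfolding E_def by auto
    moreover have "f y = f (x0 + y) - f x0" by (simp add: blinfun.add_right)
    moreover have "norm (f (x0 + y) - f x0) \<le> norm (f (x0 + y)) + norm (f x0)" by (rule norm_triangle_ineq4)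
    ultimately show ?thesis by simp
  qed
  have "norm f \<le> 4 * real k / r" if "f \<in> F" for f
  proof (rule norm_blinfun_bound)
    show "0 \<le> 4 * real k / r" using r by simp
    fix y
    show "norm (f y) \<le> 4 * real k / r * norm y"
    proof (cases "y = 0")
      case True then show ?thesis by simp
    next
      case False
      define c where "c = r / (2 * norm y)"
      have c: "c > 0" using False r by (simp add: c_def)
      have "norm (c *\<^sub>R y) < r" using False r by (simp add: c_def)
      then have "norm (f (c *\<^sub>R y)) \<le> 2 * real k" using small that by blast
      then have "c * norm (f y) \<le> 2 * real k" using c by (simp add: blinfun.scaleR_right)
      then have "norm (f y) \<le> 2 * real k / c" using c by (simp add: field_simps)
      also have "2 * real k / c = 4 * real k / r * norm y" using False r by (simp add: c_def field_simps)
      finally show ?thesis .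
    qed
  qed
  then show ?thesis by blast
qed

lemma bp_0[simp]: "blinfun_pow A 0 = id_blinfun"
  by (simp add: blinfun_pow_def)

lemma bp_Suc: "blinfun_pow A (Suc n) = A o\<^sub>L blinfun_pow A n"
  by (simp add: blinfun_pow_def)

lemma bp_Suc_apply: "blinfun_apply (blinfun_pow A (Suc n)) x = A (blinfun_pow A n x)"
  by (simp add: bp_Suc)

lemma bp_add: "blinfun_pow A (m + n) = blinfun_pow A m o\<^sub>L blinfun_pow A n"
proof (induction m)
  case 0
  show ?case by (intro blinfun_eqI) simp
next
  case (Suc m)
  show ?case by (intro blinfun_eqI) (simp add: bp_Suc Suc.IH)
qed

lemma bp_norm: "norm A \<le> 1 \<Longrightarrow> norm (blinfun_pow A n) \<le> 1"
proof (induction n)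
  case 0
  show ?case using norm_blinfun_id_le by simp
next
  case (Suc n)
  have "norm (blinfun_pow A (Suc n)) \<le> norm A * norm (blinfun_pow A n)"
    unfolding bp_Suc by (rule norm_blinfun_compose)
  also have "\<dots> \<le> 1" using Suc by (simp add: mult_le_one)
  finally show ?case .
qed

lemma bp_mult: "blinfun_pow A (m * n) = blinfun_pow (blinfun_pow A m) n"
proof (induction n)
  case 0
  show ?case by simp
next
  case (Suc n)
  have "m * Suc n = m + m * n" by simp
  then show ?case by (simp add: bp_add bp_Suc Suc.IH)
qed

lemma sg_law_op: "c0_semigroup U \<Longrightarrow> 0 \<le> s \<Longrightarrow> 0 \<le> r \<Longrightarrow> U (s + r) = U s o\<^sub>L U r"
  unfolding c0_semigroup_def by blast

lemma sg_law: "c0_semigroup U \<Longrightarrow> 0 \<le> s \<Longrightarrow> 0 \<le> r \<Longrightarrow> U s (U r x) = U (s + r) x"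
  using sg_law_op[of U s r] by simp

lemma sg_zero: "c0_semigroup U \<Longrightarrow> U 0 x = x"
  unfolding c0_semigroup_def by simp

lemma sg_cont0: "c0_semigroup U \<Longrightarrow> ((\<lambda>h. U h x) \<longlongrightarrow> x) (at_right 0)"
  unfolding c0_semigroup_def by simp

lemma sg_pow: "c0_semigroup U \<Longrightarrow> 0 \<le> s \<Longrightarrow> blinfun_pow (U s) n = U (real n * s)"
proof (induction n)
  case 0
  then show ?case by (intro blinfun_eqI) (simp add: sg_zero)
next
  case (Suc n)
  show ?case
  proof (intro blinfun_eqI)
    fix x
    have "blinfun_pow (U s) (Suc n) x = U s (U (real n * s) x)" by (simp add: bp_Suc Suc)
    also have "\<dots> = U (s + real n * s) x" using Suc by (simp add: sg_law)
    also have "s + real n * s = real (Suc n) * s" by (simp add: algebra_simps)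
    finally show "blinfun_pow (U s) (Suc n) x = U (real (Suc n) * s) x" .
  qed
qed

lemma gen_lim: "is_generator U G E \<Longrightarrow> y \<in> E \<Longrightarrow>
   ((\<lambda>h. (1 / h) *\<^sub>R (U h y - y)) \<longlongrightarrow> G y) (at_right 0)"
  unfolding is_generator_def by blast

lemma gen_mem: "is_generator U G E \<Longrightarrow>
   ((\<lambda>h. (1 / h) *\<^sub>R (U h y - y)) \<longlongrightarrow> z) (at_right 0) \<Longrightarrow> y \<in> E"
  unfolding is_generator_def by blast

lemma gen_inv:
  assumes U: "c0_semigroup U" and G: "is_generator U G E" and y: "y \<in> E" and r: "0 \<le> r"
  shows "U r y \<in> E \<and> G (U r y) = U r (G y)"
proof -
  have l1: "((\<lambda>h. U r ((1 / h) *\<^sub>R (U h y - y))) \<longlongrightarrow> U r (G y)) (at_right 0)"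
    by (rule bounded_linear.tendsto[OF blinfun.bounded_linear_right gen_lim[OF G y]])
  have ev: "\<forall>\<^sub>F h in at_right 0. U r ((1 / h) *\<^sub>R (U h y - y)) = (1 / h) *\<^sub>R (U h (U r y) - U r y)"
    using eventually_at_right_less[of "0::real"]
  proof (rule eventually_mono)
    fix h :: real assume h: "0 < h"
    have "U r (U h y) = U h (U r y)" using U r h by (simp add: sg_law add.commute)
    then show "U r ((1 / h) *\<^sub>R (U h y - y)) = (1 / h) *\<^sub>R (U h (U r y) - U r y)"
      by (simp add: blinfun.scaleR_right blinfun.diff_right)
  qed
  have l2: "((\<lambda>h. (1 / h) *\<^sub>R (U h (U r y) - U r y)) \<longlongrightarrow> U r (G y)) (at_right 0)"
    using l1 ev by (rule Lim_transform_eventually)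
  have mem: "U r y \<in> E" by (rule gen_mem[OF G l2])
  have "G (U r y) = U r (G y)"
    using tendsto_unique[OF trivial_limit_at_right_real gen_lim[OF G mem] l2] by simp
  with mem show ?thesis by simp
qed

lemma sg_locbd0:
  assumes U: "c0_semigroup U"
  shows "\<exists>h>0. \<exists>K. \<forall>r\<in>{0..h}. norm (U r) \<le> K"
proof (rule ccontr)
  assume "\<not> ?thesis"
  then have A: "\<forall>h>0. \<forall>K. \<exists>r\<in>{0..h}. norm (U r) > K" by (simp add: not_le)
  have "\<forall>k::nat. \<exists>r. r \<in> {0..1 / real (Suc k)} \<and> norm (U r) > real k + 1"
  proof
    fix k :: nat
    have "1 / real (Suc k) > 0" by simp
    then show "\<exists>r. r \<in> {0..1 / real (Suc k)} \<and> norm (U r) > real k + 1" using A by blast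
  qed
  then have "\<exists>rr. \<forall>k. rr k \<in> {0..1 / real (Suc k)} \<and> norm (U (rr k)) > real k + 1"
    by (rule choice)
  then obtain rr where rr: "\<And>k. rr k \<in> {0..1 / real (Suc k)} \<and> norm (U (rr k)) > real k + 1"
    by blast
  have id1: "norm (U 0) \<le> 1" using U norm_blinfun_id_le unfolding c0_semigroup_def by simp
  have pos: "rr k > 0" for k
  proof -
    have "rr k \<ge> 0" using rr[of k] by simp
    moreover have "rr k \<noteq> 0"
    proof
      assume "rr k = 0"
      then have "norm (U 0) > real k + 1" using rr[of k] by simp
      then show False using id1 by simp
    qed
    ultimately show ?thesis by simp
  qed
  have "rr \<longlonglongrightarrow> 0"
  proof (rule tendsto_sandwich[where f="\<lambda>_. 0" and h="\<lambda>k. 1 / real (Suc k)"])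
    show "\<forall>\<^sub>F n in sequentially. 0 \<le> rr n" using pos by (simp add: less_imp_le)
    show "\<forall>\<^sub>F n in sequentially. rr n \<le> 1 / real (Suc n)" using rr by simp
    show "(\<lambda>n. 0::real) \<longlonglongrightarrow> 0" by simp
    show "(\<lambda>n. 1 / real (Suc n)) \<longlonglongrightarrow> 0" by (rule LIMSEQ_Suc[OF lim_const_over_n])
  qed
  moreover have "\<forall>\<^sub>F k in sequentially. rr k \<in> {0<..} \<and> rr k \<noteq> 0"
    using pos by (intro always_eventually) (simp add: less_imp_neq[symmetric])
  ultimately have fl: "filterlim rr (at_right 0) sequentially"
    by (simp add: filterlim_at)
  have "\<exists>B. \<forall>f\<in>range (\<lambda>k. U (rr k)). norm (f x) \<le> B" for x
  proof -
    have "((\<lambda>k. U (rr k) x) \<longlongrightarrow> x) sequentially"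
      by (rule filterlim_compose[OF sg_cont0[OF U] fl])
    then have "Bseq (\<lambda>k. U (rr k) x)" by (rule convergent_imp_Bseq[OF convergentI])
    then obtain B where "\<forall>k. norm (U (rr k) x) \<le> B" unfolding Bseq_def by blast
    then show ?thesis by blast
  qed
  then obtain B where B: "\<forall>f\<in>range (\<lambda>k. U (rr k)). norm f \<le> B"
    using banach_steinhaus[of "range (\<lambda>k. U (rr k))"] by blast
  obtain k where k: "B \<le> real k" using real_arch_simple by blast
  have "norm (U (rr k)) \<le> B" using B by blast
  with rr[of k] k show False by simp
qed

lemma sg_locbd:
  assumes U: "c0_semigroup U"
  shows "\<exists>K\<ge>1. \<forall>r\<in>{0..Tm}. norm (U r) \<le> K"
proof -
  obtain h K0 where h: "h > 0" and K0: "\<forall>r\<in>{0..h}. norm (U r) \<le> K0"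
    using sg_locbd0[OF U] by blast
  define K1 where "K1 = max 1 K0"
  have K1: "K1 \<ge> 1" "\<forall>r\<in>{0..h}. norm (U r) \<le> K1" using K0 by (auto simp: K1_def intro: le_max_iff_disj[THEN iffD2])
  have main: "\<forall>r\<in>{0..(real m + 1) * h}. norm (U r) \<le> K1 ^ (m + 1)" for m :: nat
  proof (induction m)
    case 0
    then show ?case using K1 by simp
  next
    case (Suc m)
    show ?case
    proof
      fix r assume r: "r \<in> {0..(real (Suc m) + 1) * h}"
      show "norm (U r) \<le> K1 ^ (Suc m + 1)"
      proof (cases "r \<le> (real m + 1) * h")
        case True
        then have "norm (U r) \<le> K1 ^ (m + 1)" using Suc r by simp
        also have "\<dots> \<le> K1 ^ (Suc m + 1)" using K1 by (intro power_increasing) auto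
        finally show ?thesis .
      next
        case False
        have hm: "0 \<le> h * real m" using h by simp
        have e1: "(real m + 1) * h = h * real m + h" by (simp add: algebra_simps)
        have e2: "(real (Suc m) + 1) * h = h * real m + 2 * h" by (simp add: algebra_simps)
        have r1: "h * real m + h < r" using False e1 by linarith
        have r2: "r \<le> h * real m + 2 * h" using r e2 by simp
        have rh1: "h \<le> r" using r1 hm by linarith
        have rh2: "r - h \<in> {0..(real m + 1) * h}"
          unfolding e1 atLeastAtMost_iff using r1 r2 hm by linarith
        note rh = rh1 rh2
        have "U (h + (r - h)) = U h o\<^sub>L U (r - h)"
          using sg_law_op[OF U, of h "r - h"] h rh by simp
        then have eq: "U r = U h o\<^sub>L U (r - h)" by simp
        have "norm (U r) \<le> norm (U h) * norm (U (r - h))" unfolding eq by (rule norm_blinfun_compose)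
        also have "\<dots> \<le> K1 * K1 ^ (m + 1)"
          using K1 Suc rh h by (intro mult_mono) auto
        finally show ?thesis by simp
      qed
    qed
  qed
  obtain m :: nat where m: "Tm / h \<le> real m" using real_arch_simple by blast
  have "Tm \<le> (real m + 1) * h" using m h by (simp add: field_simps)
  then have "\<forall>r\<in>{0..Tm}. norm (U r) \<le> K1 ^ (m + 1)" using main[of m] by auto
  moreover have "K1 ^ (m + 1) \<ge> 1" using K1(1) by (rule one_le_power)
  ultimately show ?thesis by blast
qed

lemma sg_deriv:
  assumes U: "c0_semigroup U" and G: "is_generator U G E" and y: "y \<in> E"
    and K: "\<forall>r\<in>{0..Tm}. norm (U r) \<le> K" and r: "r \<in> {0..Tm}"
  shows "((\<lambda>u. U u y) has_vector_derivative U r (G y)) (at r within {0..Tm})"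
proof -
  define q where "q h = (1 / h) *\<^sub>R (U h y - y)" for h
  define e where "e h = norm (q h - G y) + norm (U h (G y) - G y)" for h
  have q: "(q \<longlongrightarrow> G y) (at_right 0)" unfolding q_def by (rule gen_lim[OF G y])
  have e: "(e \<longlongrightarrow> 0) (at_right 0)"
  proof -
    have "((\<lambda>h. norm (q h - G y)) \<longlongrightarrow> 0) (at_right 0)" by (intro tendsto_norm_zero LIM_zero q)
    moreover have "((\<lambda>h. norm (U h (G y) - G y)) \<longlongrightarrow> 0) (at_right 0)"
      by (intro tendsto_norm_zero LIM_zero sg_cont0[OF U])
    ultimately have "((\<lambda>h. norm (q h - G y) + norm (U h (G y) - G y)) \<longlongrightarrow> 0 + 0) (at_right 0)"
      by (rule tendsto_add)
    then show ?thesis unfolding e_def by simp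
  qed
  have K0: "0 \<le> K" using K r norm_ge_zero[of "U r"] by (meson order_trans)
  have r0: "0 \<le> r" using r by simp
  have key: "norm ((U u y - U r y - (u - r) *\<^sub>R U r (G y)) /\<^sub>R norm (u - r)) \<le> K * e (norm (u - r))"
    if u: "u \<in> {0..Tm}" "u \<noteq> r" for u
  proof (cases "r < u")
    case True
    define h where "h = u - r"
    have h: "h > 0" "u = r + h" "norm (u - r) = h" using True by (auto simp: h_def)
    have uy: "U u y = U r (U h y)" using U h r0 by (simp add: sg_law)
    have "U r (q h - G y) = (1 / h) *\<^sub>R (U r (U h y) - U r y) - U r (G y)"
      by (simp add: q_def blinfun.diff_right blinfun.scaleR_right)
    also have "\<dots> = (U u y - U r y - (u - r) *\<^sub>R U r (G y)) /\<^sub>R norm (u - r)"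
      using h uy by (simp add: scaleR_right_diff_distrib divide_inverse)
    finally have eq: "(U u y - U r y - (u - r) *\<^sub>R U r (G y)) /\<^sub>R norm (u - r) = U r (q h - G y)" by simp
    have "norm (U r (q h - G y)) \<le> norm (U r) * norm (q h - G y)" by (rule norm_blinfun)
    also have "\<dots> \<le> K * norm (q h - G y)" using K r by (intro mult_right_mono) auto
    also have "\<dots> \<le> K * e h" unfolding e_def using K0 by (intro mult_left_mono) auto
    finally show ?thesis using eq h by simp
  next
    case False
    define h where "h = r - u"
    have h: "h > 0" "r = u + h" "norm (u - r) = h" "u - r = - h" using False u by (auto simp: h_def)
    have u0: "0 \<le> u" using u by simp
    have ry: "U r y = U u (U h y)" "U r (G y) = U u (U h (G y))"
      using sg_law[OF U u0 less_imp_le[OF h(1)], of y] sg_law[OF U u0 less_imp_le[OF h(1)], of "G y"] h(2)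
      by simp_all
    have "(U u y - U r y - (u - r) *\<^sub>R U r (G y)) /\<^sub>R norm (u - r)
        = (U u y - U u (U h y) + h *\<^sub>R U u (U h (G y))) /\<^sub>R h" using h ry by simp
    also have "\<dots> = (1 / h) *\<^sub>R (U u y - U u (U h y)) + U u (U h (G y))"
      using h(1) by (simp add: scaleR_right_distrib divide_inverse)
    also have "\<dots> = U u (U h (G y) - G y) - U u (q h - G y)"
      by (simp add: q_def blinfun.diff_right blinfun.add_right blinfun.scaleR_right scaleR_right_diff_distrib algebra_simps)
    finally have eq: "(U u y - U r y - (u - r) *\<^sub>R U r (G y)) /\<^sub>R norm (u - r)
        = U u (U h (G y) - G y) - U u (q h - G y)" .
    have Ku: "norm (U u) \<le> K" using K u by simp
    have "norm (U u (U h (G y) - G y) - U u (q h - G y))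
        \<le> norm (U u (U h (G y) - G y)) + norm (U u (q h - G y))" by (rule norm_triangle_ineq4)
    also have "\<dots> \<le> norm (U u) * norm (U h (G y) - G y) + norm (U u) * norm (q h - G y)"
      by (intro add_mono norm_blinfun)
    also have "\<dots> \<le> K * norm (U h (G y) - G y) + K * norm (q h - G y)"
      using Ku by (intro add_mono mult_right_mono) auto
    also have "\<dots> = K * e h" unfolding e_def by (simp add: algebra_simps)
    finally have fin: "norm (U u (U h (G y) - G y) - U u (q h - G y)) \<le> K * e h" .
    show ?thesis using fin by (subst eq) (simp only: h(3))
  qed
  have fl: "filterlim (\<lambda>u. norm (u - r)) (at_right 0) (at r within {0..Tm})"
    unfolding filterlim_at
  proof
    show "\<forall>\<^sub>F u in at r within {0..Tm}. norm (u - r) \<in> {0<..} \<and> norm (u - r) \<noteq> 0"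
      unfolding eventually_at_filter by (rule always_eventually) simp
    show "((\<lambda>u. norm (u - r)) \<longlongrightarrow> 0) (at r within {0..Tm})"
      by (intro tendsto_norm_zero LIM_zero tendsto_ident_at)
  qed
  have e2: "((\<lambda>u. e (norm (u - r))) \<longlongrightarrow> 0) (at r within {0..Tm})"
    by (rule filterlim_compose[OF e fl])
  have g: "((\<lambda>u. K * e (norm (u - r))) \<longlongrightarrow> 0) (at r within {0..Tm})"
    using tendsto_mult[OF tendsto_const e2, of K] by simp
  have lim: "((\<lambda>u. (U u y - U r y - (u - r) *\<^sub>R U r (G y)) /\<^sub>R norm (u - r)) \<longlongrightarrow> 0) (at r within {0..Tm})"
  proof (rule Lim_null_comparison[OF _ g])
    show "\<forall>\<^sub>F u in at r within {0..Tm}. norm ((U u y - U r y - (u - r) *\<^sub>R U r (G y)) /\<^sub>R norm (u - r)) \<le> K * e (norm (u - r))"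
      unfolding eventually_at_filter
    proof (rule always_eventually, intro allI impI)
      fix u assume "u \<noteq> r" "u \<in> {0..Tm}"
      then show "norm ((U u y - U r y - (u - r) *\<^sub>R U r (G y)) /\<^sub>R norm (u - r)) \<le> K * e (norm (u - r))"
        using key[of u] by blast
    qed
  qed
  show ?thesis
    unfolding has_vector_derivative_def has_derivative_at_within
  proof (intro conjI)
    show "bounded_linear (\<lambda>x. x *\<^sub>R U r (G y))" by (rule bounded_linear_scaleR_left)
    show "((\<lambda>u. (U u y - U r y - (u - r) *\<^sub>R U r (G y)) /\<^sub>R norm (u - r)) \<longlongrightarrow> 0) (at r within {0..Tm})"
      by (rule lim)
  qed
qed

lemma sg_taylor1:
  assumes U: "c0_semigroup U" and G: "is_generator U G E" and y: "y \<in> E"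
    and K: "\<forall>r\<in>{0..Tm}. norm (U r) \<le> K" and s: "s \<in> {0..Tm}"
  shows "norm (U s y - y - s *\<^sub>R G y) \<le> s * ((K + 1) * norm (G y))"
proof -
  have d: "((\<lambda>u. U u y) has_vector_derivative U u (G y)) (at u within {0..s})" if "u \<in> {0..s}" for u
  proof (rule has_vector_derivative_within_subset[where S="{0..Tm}"])
    show "((\<lambda>u. U u y) has_vector_derivative U u (G y)) (at u within {0..Tm})"
      using that s by (intro sg_deriv[OF U G y K]) auto
    show "{0..s} \<subseteq> {0..Tm}" using s by auto
  qed
  have b: "norm (U u (G y) - U 0 (G y)) \<le> (K + 1) * norm (G y)" if "u \<in> {0..s}" for u
  proof -
    have Ku: "norm (U u) \<le> K" using K that s by auto
    have "norm (U u (G y) - U 0 (G y)) \<le> norm (U u (G y)) + norm (G y)"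
      using norm_triangle_ineq4[of "U u (G y)" "G y"] by (simp add: sg_zero[OF U])
    also have "\<dots> \<le> norm (U u) * norm (G y) + norm (G y)" by (intro add_mono norm_blinfun) auto
    also have "\<dots> \<le> K * norm (G y) + norm (G y)" using Ku by (intro add_mono mult_right_mono) auto
    finally show ?thesis by (simp add: algebra_simps)
  qed
  have "norm ((\<lambda>u. U u y) s - (\<lambda>u. U u y) 0 - (s - 0) *\<^sub>R (\<lambda>u. U u (G y)) 0) \<le> norm (s - 0) * ((K + 1) * norm (G y))"
  proof (rule vector_differentiable_bound_linearization[where S="{0..s}"])
    show "\<And>x. x \<in> {0..s} \<Longrightarrow> ((\<lambda>u. U u y) has_vector_derivative U x (G y)) (at x within {0..s})" by (rule d)
    show "closed_segment 0 s \<subseteq> {0..s}" using s by (simp add: closed_segment_eq_real_ivl)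
    show "\<And>x. x \<in> {0..s} \<Longrightarrow> norm (U x (G y) - U 0 (G y)) \<le> (K + 1) * norm (G y)" by (rule b)
    show "0 \<in> {0..s}" using s by simp
  qed
  then show ?thesis using s by (simp add: sg_zero[OF U])
qed

lemma sg_K0: fixes Tm :: real shows "\<forall>r\<in>{0..Tm}. norm (U r) \<le> K \<Longrightarrow> 0 \<le> Tm \<Longrightarrow> (0::real) \<le> K"
proof -
  assume K: "\<forall>r\<in>{0..Tm}. norm (U r) \<le> K" and Tm: "0 \<le> Tm"
  have "(0::real) \<in> {0..Tm}" using Tm by simp
  then have "norm (U 0) \<le> K" using K by blast
  then show "0 \<le> K" using norm_ge_zero[of "U 0"] by linarith
qed

lemma sg_lip:
  assumes U: "c0_semigroup U" and G: "is_generator U G E" and y: "y \<in> E"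
    and K: "\<forall>r\<in>{0..Tm}. norm (U r) \<le> K" and s: "s \<in> {0..Tm}"
  shows "norm (U s y - y) \<le> s * ((K + 2) * norm (G y))"
proof -
  have "norm (U s y - y) \<le> norm (U s y - y - s *\<^sub>R G y) + norm (s *\<^sub>R G y)"
    using norm_triangle_sub[of "U s y - y" "s *\<^sub>R G y"] by simp
  also have "\<dots> \<le> s * ((K + 1) * norm (G y)) + s * norm (G y)"
    using sg_taylor1[OF U G y K s] s by (intro add_mono) auto
  finally show ?thesis by (simp add: algebra_simps)
qed

lemma sg_taylor2:
  assumes U: "c0_semigroup U" and G: "is_generator U G E" and y: "y \<in> E" and Gy: "G y \<in> E"
    and K: "\<forall>r\<in>{0..Tm}. norm (U r) \<le> K" and s: "s \<in> {0..Tm}"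
  shows "norm (U s y - y - s *\<^sub>R G y) \<le> s * (s * ((K + 2) * norm (G (G y))))"
proof -
  have K0: "0 \<le> K" using sg_K0[OF K] s by simp
  have d: "((\<lambda>u. U u y) has_vector_derivative U u (G y)) (at u within {0..s})" if "u \<in> {0..s}" for u
  proof (rule has_vector_derivative_within_subset[where S="{0..Tm}"])
    show "((\<lambda>u. U u y) has_vector_derivative U u (G y)) (at u within {0..Tm})"
      using that s by (intro sg_deriv[OF U G y K]) auto
    show "{0..s} \<subseteq> {0..Tm}" using s by auto
  qed
  have b: "norm (U u (G y) - U 0 (G y)) \<le> s * ((K + 2) * norm (G (G y)))" if "u \<in> {0..s}" for u
  proof -
    have "norm (U u (G y) - U 0 (G y)) \<le> u * ((K + 2) * norm (G (G y)))"
      using sg_lip[OF U G Gy K, of u] that s by (simp add: sg_zero[OF U])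
    also have "\<dots> \<le> s * ((K + 2) * norm (G (G y)))"
      using that K0 by (intro mult_right_mono) auto
    finally show ?thesis .
  qed
  have "norm ((\<lambda>u. U u y) s - (\<lambda>u. U u y) 0 - (s - 0) *\<^sub>R (\<lambda>u. U u (G y)) 0) \<le> norm (s - 0) * (s * ((K + 2) * norm (G (G y))))"
  proof (rule vector_differentiable_bound_linearization[where S="{0..s}"])
    show "\<And>x. x \<in> {0..s} \<Longrightarrow> ((\<lambda>u. U u y) has_vector_derivative U x (G y)) (at x within {0..s})" by (rule d)
    show "closed_segment 0 s \<subseteq> {0..s}" using s by (simp add: closed_segment_eq_real_ivl)
    show "\<And>x. x \<in> {0..s} \<Longrightarrow> norm (U x (G y) - U 0 (G y)) \<le> s * ((K + 2) * norm (G (G y)))" by (rule b)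
    show "0 \<in> {0..s}" using s by simp
  qed
  then show ?thesis using s by (simp add: sg_zero[OF U])
qed

lemma small_le:
  fixes a C \<delta> :: real
  assumes "\<And>n. n \<ge> 1 \<Longrightarrow> a \<le> C * \<delta> ^ n" "0 \<le> \<delta>" "\<delta> < 1"
  shows "a \<le> 0"
proof -
  have "(\<lambda>n. C * \<delta> ^ n) \<longlonglongrightarrow> C * 0"
    by (intro tendsto_mult tendsto_const LIMSEQ_power_zero) (use assms in simp)
  moreover have "\<forall>\<^sub>F n in sequentially. a \<le> C * \<delta> ^ n"
    using eventually_ge_at_top[of "1::nat"] by eventually_elim (use assms in auto)
  ultimately show ?thesis
    using tendsto_le[OF trivial_limit_sequentially _ tendsto_const] by fastforce
qed

lemma leak_gen:
  assumes T: "c0_semigroup T" and gen: "is_generator T L D"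
    and leak2: "\<And>s. s \<ge> 0 \<Longrightarrow> norm ((id_blinfun - P) o\<^sub>L T s o\<^sub>L P) \<le> s * b"
    and v: "v \<in> D" "P v = v"
  shows "norm (L v - P (L v)) \<le> b * norm v"
proof -
  have l: "((\<lambda>h. (1 / h) *\<^sub>R (T h v - v) - P ((1 / h) *\<^sub>R (T h v - v))) \<longlongrightarrow> L v - P (L v)) (at_right 0)"
    by (intro tendsto_diff bounded_linear.tendsto[OF blinfun.bounded_linear_right] gen_lim[OF gen v(1)])
  have ev: "\<forall>\<^sub>F h in at_right 0. norm ((1 / h) *\<^sub>R (T h v - v) - P ((1 / h) *\<^sub>R (T h v - v))) \<le> b * norm v"
    using eventually_at_right_less[of "0::real"]
  proof (rule eventually_mono)
    fix h :: real assume h: "0 < h"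
    have eq: "(1 / h) *\<^sub>R (T h v - v) - P ((1 / h) *\<^sub>R (T h v - v)) = (1 / h) *\<^sub>R (((id_blinfun - P) o\<^sub>L T h o\<^sub>L P) v)"
      using v(2) by (simp add: blinfun.diff_right blinfun.scaleR_right blinfun.diff_left scaleR_right_diff_distrib)
    have "norm (((id_blinfun - P) o\<^sub>L T h o\<^sub>L P) v) \<le> norm ((id_blinfun - P) o\<^sub>L T h o\<^sub>L P) * norm v"
      by (rule norm_blinfun)
    also have "\<dots> \<le> (h * b) * norm v" using leak2[of h] h by (intro mult_right_mono) auto
    finally have "norm (((id_blinfun - P) o\<^sub>L T h o\<^sub>L P) v) \<le> h * (b * norm v)" by simp
    then have "(1 / h) * norm (((id_blinfun - P) o\<^sub>L T h o\<^sub>L P) v) \<le> b * norm v"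
      using h by (simp add: field_simps)
    then show "norm ((1 / h) *\<^sub>R (T h v - v) - P ((1 / h) *\<^sub>R (T h v - v))) \<le> b * norm v"
      unfolding eq using h by simp
  qed
  show ?thesis by (rule Lim_norm_ubound[OF trivial_limit_at_right_real l ev])
qed



lemma T_step:
  fixes T :: "real \<Rightarrow> ('a::banach \<Rightarrow>\<^sub>L 'a)" and P :: "'a \<Rightarrow>\<^sub>L 'a" and L :: "'a \<Rightarrow> 'a"
  assumes T: "c0_semigroup T" and KT: "\<forall>r\<in>{0..Tm}. norm (T r) \<le> 1" and gen: "is_generator T L D"
    and Pn: "norm P \<le> 1" and PP: "\<And>x. P (P x) = P x"
    and leak1: "\<And>s. s \<ge> 0 \<Longrightarrow> norm (P o\<^sub>L T s o\<^sub>L (id_blinfun - P)) \<le> s * b"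
    and b: "0 \<le> b"
    and z: "z \<in> D" "P (L z) \<in> D" and s: "s \<in> {0..Tm}"
  shows "norm (P (T s z) - P z - s *\<^sub>R P (L z)) \<le> s * (s * (3 * norm (L (P (L z))) + b * norm (L z)))"
proof -
  define w where "w = P (L z)"
  have w: "w \<in> D" using z by (simp add: w_def)
  have d: "((\<lambda>u. P (T u z)) has_vector_derivative P (T u (L z))) (at u within {0..s})" if "u \<in> {0..s}" for u
  proof -
    have "u \<in> {0..Tm}" using that s by auto
    then have d0: "((\<lambda>u. T u z) has_vector_derivative T u (L z)) (at u within {0..Tm})"
      by (rule sg_deriv[OF T gen z(1) KT])
    have sub: "{0..s} \<subseteq> {0..Tm}" using s by auto
    have d1: "((\<lambda>u. T u z) has_vector_derivative T u (L z)) (at u within {0..s})"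
      by (rule has_vector_derivative_within_subset[OF d0 sub])
    show ?thesis by (rule bounded_linear.has_vector_derivative[OF blinfun.bounded_linear_right d1])
  qed
  have Pv: "norm (P v) \<le> norm v" for v
  proof -
    have "norm (P v) \<le> norm P * norm v" by (rule norm_blinfun)
    also have "\<dots> \<le> 1 * norm v" by (rule mult_right_mono[OF Pn norm_ge_zero])
    finally show ?thesis by simp
  qed
  have bd: "norm (P (T u (L z)) - P (T 0 (L z))) \<le> s * (3 * norm (L w) + b * norm (L z))"
    if u: "u \<in> {0..s}" for u
  proof -
    have eq: "P (T u (L z)) - P (T 0 (L z)) = P (T u w - w) + (P o\<^sub>L T u o\<^sub>L (id_blinfun - P)) (L z)"
      by (simp add: w_def blinfun.diff_right blinfun.diff_left PP sg_zero[OF T])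
    have "norm (P (T u w - w)) \<le> norm (T u w - w)" by (rule Pv)
    also have "\<dots> \<le> u * ((1 + 2) * norm (L w))"
      using sg_lip[OF T gen w KT, of u] u s by simp
    finally have n1: "norm (P (T u w - w)) \<le> u * (3 * norm (L w))" by simp
    have "norm ((P o\<^sub>L T u o\<^sub>L (id_blinfun - P)) (L z)) \<le> norm (P o\<^sub>L T u o\<^sub>L (id_blinfun - P)) * norm (L z)"
      by (rule norm_blinfun)
    also have "\<dots> \<le> (u * b) * norm (L z)" using leak1[of u] u by (intro mult_right_mono) auto
    finally have n2: "norm ((P o\<^sub>L T u o\<^sub>L (id_blinfun - P)) (L z)) \<le> u * (b * norm (L z))" by simp
    have "norm (P (T u (L z)) - P (T 0 (L z))) \<le> u * (3 * norm (L w)) + u * (b * norm (L z))"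
      unfolding eq using n1 n2 norm_triangle_ineq[of "P (T u w - w)" "(P o\<^sub>L T u o\<^sub>L (id_blinfun - P)) (L z)"]
      by linarith
    also have "\<dots> = u * (3 * norm (L w) + b * norm (L z))" by (simp add: algebra_simps)
    also have "\<dots> \<le> s * (3 * norm (L w) + b * norm (L z))"
      using u b by (intro mult_right_mono) auto
    finally show ?thesis .
  qed
  have "norm ((\<lambda>u. P (T u z)) s - (\<lambda>u. P (T u z)) 0 - (s - 0) *\<^sub>R (\<lambda>u. P (T u (L z))) 0)
      \<le> norm (s - 0) * (s * (3 * norm (L w) + b * norm (L z)))"
  proof (rule vector_differentiable_bound_linearization[where S="{0..s}"])
    show "\<And>x. x \<in> {0..s} \<Longrightarrow> ((\<lambda>u. P (T u z)) has_vector_derivative P (T x (L z))) (at x within {0..s})" by (rule d)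
    show "closed_segment 0 s \<subseteq> {0..s}" using s by (simp add: closed_segment_eq_real_ivl)
    show "\<And>x. x \<in> {0..s} \<Longrightarrow> norm (P (T x (L z)) - P (T 0 (L z))) \<le> s * (3 * norm (L w) + b * norm (L z))" by (rule bd)
    show "0 \<in> {0..s}" using s by simp
  qed
  then show ?thesis using s by (simp add: sg_zero[OF T] w_def)
qed

lemma S_range:
  fixes S :: "real \<Rightarrow> ('a::banach \<Rightarrow>\<^sub>L 'a)" and P :: "'a \<Rightarrow>\<^sub>L 'a" and A :: "'a \<Rightarrow> 'a"
  assumes S: "c0_semigroup S" and gen: "is_generator S A DA" and K: "\<forall>r\<in>{0..Tm}. norm (S r) \<le> K"
    and PA: "\<And>w. w \<in> DA \<Longrightarrow> P (A w) = A w" and z: "z \<in> DA" and r: "r \<in> {0..Tm}"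
  shows "P (S r z) - S r z = P z - z"
proof -
  have d: "((\<lambda>u. P (S u z) - S u z) has_vector_derivative 0) (at u within {0..r})" if u: "u \<in> {0..r}" for u
  proof -
    have "u \<in> {0..Tm}" using u r by auto
    then have d0: "((\<lambda>u. S u z) has_vector_derivative S u (A z)) (at u within {0..Tm})"
      by (rule sg_deriv[OF S gen z K])
    have sub: "{0..r} \<subseteq> {0..Tm}" using r by auto
    have d1: "((\<lambda>u. S u z) has_vector_derivative S u (A z)) (at u within {0..r})"
      by (rule has_vector_derivative_within_subset[OF d0 sub])
    have d2: "((\<lambda>u. P (S u z)) has_vector_derivative P (S u (A z))) (at u within {0..r})"
      by (rule bounded_linear.has_vector_derivative[OF blinfun.bounded_linear_right d1])
    have u0: "0 \<le> u" using u by simp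
    have gi: "S u z \<in> DA \<and> A (S u z) = S u (A z)" by (rule gen_inv[OF S gen z u0])
    then have "P (A (S u z)) = A (S u z)" using PA by blast
    then have "P (S u (A z)) = S u (A z)" using gi by simp
    then show ?thesis using has_vector_derivative_diff[OF d2 d1] by simp
  qed
  have "norm ((\<lambda>u. P (S u z) - S u z) r - (\<lambda>u. P (S u z) - S u z) 0 - (r - 0) *\<^sub>R (\<lambda>u. (0::'a)) 0) \<le> norm (r - 0) * 0"
  proof (rule vector_differentiable_bound_linearization[where S="{0..r}"])
    show "\<And>x. x \<in> {0..r} \<Longrightarrow> ((\<lambda>u. P (S u z) - S u z) has_vector_derivative 0) (at x within {0..r})" by (rule d)
    show "closed_segment 0 r \<subseteq> {0..r}" using r by (simp add: closed_segment_eq_real_ivl)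
    show "\<And>x. x \<in> {0..r} \<Longrightarrow> norm ((0::'a) - 0) \<le> 0" by simp
    show "0 \<in> {0..r}" using r by simp
  qed
  then show ?thesis by (simp add: sg_zero[OF S])
qed

lemma normP_le:
  fixes P :: "'a::real_normed_vector \<Rightarrow>\<^sub>L 'a"
  assumes "norm P \<le> 1" shows "norm (P v) \<le> norm v"
proof -
  have "norm (P v) \<le> norm P * norm v" by (rule norm_blinfun)
  also have "\<dots> \<le> 1 * norm v" by (rule mult_right_mono[OF assms norm_ge_zero])
  finally show ?thesis by simp
qed

lemma normK_le:
  fixes U :: "'a::real_normed_vector \<Rightarrow>\<^sub>L 'a"
  assumes "norm U \<le> K" shows "norm (U v) \<le> K * norm v"
proof -
  have "norm (U v) \<le> norm U * norm v" by (rule norm_blinfun)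
  also have "\<dots> \<le> K * norm v" by (rule mult_right_mono[OF assms norm_ge_zero])
  finally show ?thesis .
qed

lemma L_bound:
  fixes T :: "real \<Rightarrow> ('a::banach \<Rightarrow>\<^sub>L 'a)" and P :: "'a \<Rightarrow>\<^sub>L 'a" and L :: "'a \<Rightarrow> 'a"
  assumes T: "c0_semigroup T" and gen: "is_generator T L D"
    and leak2: "\<And>s. s \<ge> 0 \<Longrightarrow> norm ((id_blinfun - P) o\<^sub>L T s o\<^sub>L P) \<le> s * b"
    and v: "v \<in> D" "P v = v"
  shows "norm (L v) \<le> norm (P (L v)) + b * norm v"
proof -
  have "norm (L v) \<le> norm (P (L v)) + norm (L v - P (L v))"
    using norm_triangle_sub[of "L v" "P (L v)"] by simp
  also have "\<dots> \<le> norm (P (L v)) + b * norm v"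
    using leak_gen[OF T gen leak2 v] by simp
  finally show ?thesis .
qed

lemma chern_step:
  fixes T S :: "real \<Rightarrow> ('a::banach \<Rightarrow>\<^sub>L 'a)" and P :: "'a \<Rightarrow>\<^sub>L 'a" and L :: "'a \<Rightarrow> 'a"
  assumes T: "c0_semigroup T" and KT: "\<forall>r\<in>{0..t}. norm (T r) \<le> 1" and gen: "is_generator T L D"
    and Pn: "norm P \<le> 1" and PP: "\<And>x. P (P x) = P x"
    and leak1: "\<And>s. s \<ge> 0 \<Longrightarrow> norm (P o\<^sub>L T s o\<^sub>L (id_blinfun - P)) \<le> s * b"
    and leak2: "\<And>s. s \<ge> 0 \<Longrightarrow> norm ((id_blinfun - P) o\<^sub>L T s o\<^sub>L P) \<le> s * b"
    and b: "0 \<le> b"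
    and S: "c0_semigroup S" and Sgen: "is_generator S (\<lambda>x. P (L (P x))) {x. P x \<in> D}"
    and KS: "1 \<le> KS" "\<forall>r\<in>{0..t}. norm (S r) \<le> KS"
    and x: "P x \<in> D" "P (L (P x)) \<in> D"
    and rj: "rj \<in> {0..t}" and s: "s \<in> {0..t}"
  shows "norm (P (T s (P (S rj (P x)))) - S s (S rj (P x)))
     \<le> s * s * (KS * (KS + 5 + 4 * b + b ^ 2) * (norm x + norm (L (P x)) + norm (L (P (L (P x))))))"
proof -
  define A where "A = (\<lambda>x. P (L (P x)))"
  define DA where "DA = {x. P x \<in> D}"
  have SA: "is_generator S A DA" using Sgen by (simp add: A_def DA_def)
  have PA: "P (A w) = A w" for w by (simp add: A_def PP)
  have rj0: "0 \<le> rj" and s0: "0 \<le> s" using rj s by auto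
  have Px: "P x \<in> DA" using x by (simp add: DA_def PP)
  have APx: "A (P x) = P (L (P x))" by (simp add: A_def PP)
  have APxD: "A (P x) \<in> DA" using x by (simp add: DA_def APx PP)
  have AAPx: "A (A (P x)) = P (L (P (L (P x))))" by (simp add: APx A_def PP)
  define y where "y = S rj (P x)"
  have g1: "y \<in> DA \<and> A y = S rj (A (P x))" unfolding y_def by (rule gen_inv[OF S SA Px rj0])
  have g2: "S rj (A (P x)) \<in> DA \<and> A (S rj (A (P x))) = S rj (A (A (P x)))" by (rule gen_inv[OF S SA APxD rj0])
  have yDA: "y \<in> DA" and Ay: "A y = S rj (A (P x))" using g1 by auto
  have AyDA: "A y \<in> DA" and AAy: "A (A y) = S rj (A (A (P x)))" using g2 Ay by auto
  have Py: "P y = y"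
  proof -
    have "P (S rj (P x)) - S rj (P x) = P (P x) - P x"
      by (rule S_range[OF S SA KS(2) _ Px rj]) (rule PA)
    then show ?thesis unfolding y_def by (simp add: PP)
  qed
  have yD: "y \<in> D" using yDA Py by (simp add: DA_def)
  have PLy: "P (L y) = A y" using Py by (simp add: A_def)
  have PAy: "P (A y) = A y" by (rule PA)
  have AyD: "A y \<in> D" using AyDA PAy by (simp add: DA_def)
  have PLy_D: "P (L y) \<in> D" using AyD PLy by simp
  have ts: "norm (P (T s y) - P y - s *\<^sub>R P (L y)) \<le> s * (s * (3 * norm (L (P (L y))) + b * norm (L y)))"
    by (rule T_step[OF T KT gen Pn PP leak1 b yD PLy_D s])
  have ss: "norm (S s y - y - s *\<^sub>R A y) \<le> s * (s * ((KS + 2) * norm (A (A y))))"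
    by (rule sg_taylor2[OF S SA yDA AyDA KS(2) s])
  have Ly: "norm (L y) \<le> norm (A y) + b * norm y"
    using L_bound[OF T gen leak2 yD Py] PLy by simp
  have LAy: "norm (L (P (L y))) \<le> norm (A (A y)) + b * norm (A y)"
  proof -
    have "norm (L (A y)) \<le> norm (P (L (A y))) + b * norm (A y)"
      by (rule L_bound[OF T gen leak2 AyD PAy])
    moreover have "P (L (A y)) = A (A y)" using PAy by (simp add: A_def)
    ultimately show ?thesis using PLy by simp
  qed
  have eq: "P (T s (P (S rj (P x)))) - S s (S rj (P x))
      = (P (T s y) - P y - s *\<^sub>R P (L y)) - (S s y - y - s *\<^sub>R A y)"
    using Py PLy by (simp add: y_def)
  have rjK: "norm (S rj) \<le> KS" using KS(2) rj by blast
  define N0 where "N0 = norm x"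
  define N1 where "N1 = norm (L (P x))"
  define N2 where "N2 = norm (L (P (L (P x))))"
  have N: "0 \<le> N0" "0 \<le> N1" "0 \<le> N2" by (auto simp: N0_def N1_def N2_def)
  have ny: "norm y \<le> KS * N0"
  proof -
    have "norm y \<le> KS * norm (P x)" unfolding y_def by (rule normK_le[OF rjK])
    also have "\<dots> \<le> KS * norm x" using KS(1) normP_le[OF Pn] by (intro mult_left_mono) auto
    finally show ?thesis by (simp add: N0_def)
  qed
  have nAy: "norm (A y) \<le> KS * N1"
  proof -
    have "norm (A y) \<le> KS * norm (A (P x))" unfolding Ay by (rule normK_le[OF rjK])
    also have "\<dots> \<le> KS * norm (L (P x))" using KS(1) normP_le[OF Pn] by (intro mult_left_mono) (auto simp: APx)
    finally show ?thesis by (simp add: N1_def)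
  qed
  have nAAy: "norm (A (A y)) \<le> KS * N2"
  proof -
    have "norm (A (A y)) \<le> KS * norm (A (A (P x)))" unfolding AAy by (rule normK_le[OF rjK])
    also have "\<dots> \<le> KS * norm (L (P (L (P x))))" using KS(1) normP_le[OF Pn] by (intro mult_left_mono) (auto simp: AAPx)
    finally show ?thesis by (simp add: N2_def)
  qed
  have "norm (P (T s (P (S rj (P x)))) - S s (S rj (P x)))
      \<le> s * (s * (3 * norm (L (P (L y))) + b * norm (L y))) + s * (s * ((KS + 2) * norm (A (A y))))"
    unfolding eq using ts ss norm_triangle_ineq4[of "P (T s y) - P y - s *\<^sub>R P (L y)" "S s y - y - s *\<^sub>R A y"]
    by linarith
  also have "\<dots> = s * s * (3 * norm (L (P (L y))) + b * norm (L y) + (KS + 2) * norm (A (A y)))"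
    by (simp add: algebra_simps)
  also have "\<dots> \<le> s * s * ((KS + 5) * norm (A (A y)) + 4 * b * norm (A y) + b ^ 2 * norm y)"
  proof (rule mult_left_mono)
    have "3 * norm (L (P (L y))) \<le> 3 * (norm (A (A y)) + b * norm (A y))" using LAy by simp
    moreover have "b * norm (L y) \<le> b * (norm (A y) + b * norm y)" using Ly b by (rule mult_left_mono)
    ultimately show "3 * norm (L (P (L y))) + b * norm (L y) + (KS + 2) * norm (A (A y))
        \<le> (KS + 5) * norm (A (A y)) + 4 * b * norm (A y) + b ^ 2 * norm y"
      by (simp add: algebra_simps power2_eq_square)
    show "0 \<le> s * s" using s0 by simp
  qed
  also have "\<dots> \<le> s * s * ((KS + 5) * (KS * N2) + 4 * b * (KS * N1) + b ^ 2 * (KS * N0))"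
    using s0 KS(1) b nAAy nAy ny
    by (intro mult_left_mono add_mono) auto
  also have "\<dots> \<le> s * s * (KS * (KS + 5 + 4 * b + b ^ 2) * (N0 + N1 + N2))"
  proof (rule mult_left_mono)
    have k0: "0 \<le> KS" using KS(1) by simp
    have "(KS + 5) * (KS * N2) \<le> (KS + 5 + 4 * b + b ^ 2) * (KS * N2)"
      using b k0 N by (intro mult_right_mono) auto
    moreover have "4 * b * (KS * N1) \<le> (KS + 5 + 4 * b + b ^ 2) * (KS * N1)"
      using b k0 N by (intro mult_right_mono) auto
    moreover have "b ^ 2 * (KS * N0) \<le> (KS + 5 + 4 * b + b ^ 2) * (KS * N0)"
      using b k0 N by (intro mult_right_mono) auto
    ultimately show "(KS + 5) * (KS * N2) + 4 * b * (KS * N1) + b ^ 2 * (KS * N0)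
        \<le> KS * (KS + 5 + 4 * b + b ^ 2) * (N0 + N1 + N2)"
      by (simp add: algebra_simps)
    show "0 \<le> s * s" using s0 by simp
  qed
  finally show ?thesis by (simp add: N0_def N1_def N2_def)
qed


theorem corollary3p3:
  fixes T S :: "real \<Rightarrow> ('a::banach \<Rightarrow>\<^sub>L 'a)"
    and L :: "'a \<Rightarrow> 'a" and D :: "'a set"
    and M P :: "'a \<Rightarrow>\<^sub>L 'a"
    and ct \<delta> b t :: real
  assumes semigroup: "c0_contraction_semigroup T"
    and gen: "is_generator T L D"
    and M_contr: "norm M \<le> 1"
    and P_proj: "P o\<^sub>L P = P"
    and \<delta>: "0 < \<delta>" "\<delta> < 1"
    and ct: "0 \<le> ct"
    and conv: "\<And>n. n \<ge> 1 \<Longrightarrow> norm (blinfun_pow M n - P) \<le> ct * \<delta> ^ n"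
    and b: "0 \<le> b"
    and leak1: "\<And>s. s \<ge> 0 \<Longrightarrow> norm (P o\<^sub>L T s o\<^sub>L (id_blinfun - P)) \<le> s * b"
    and leak2: "\<And>s. s \<ge> 0 \<Longrightarrow> norm ((id_blinfun - P) o\<^sub>L T s o\<^sub>L P) \<le> s * b"
    and S_sg: "c0_semigroup S"
    and S_gen: "is_generator S (\<lambda>x. P (L (P x))) {x. P x \<in> D}"
    and t: "0 \<le> t"
  shows "\<exists>c>0. \<exists>n0::nat. ct * \<delta> ^ n0 < 1 \<and>
           (\<forall>n::nat. n \<ge> 1 \<longrightarrow> (\<forall>x. P x \<in> D \<and> P (L (P x)) \<in> D \<longrightarrow>
              norm (blinfun_apply (blinfun_pow (blinfun_pow M n0 o\<^sub>L T (t / real n)) n) x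
                    - S t (P x))
              \<le> c / real n * (norm x + norm (L (P x)) + norm (L (P (L (P x)))))
                 + (ct * \<delta> ^ n0) ^ n * norm x))"
proof -
  have PP: "P (P z) = P z" for z
  proof -
    have "(P o\<^sub>L P) z = P z" using P_proj by simp
    then show ?thesis by simp
  qed
  have T: "c0_semigroup T" using semigroup by (simp add: c0_contraction_semigroup_def)
  have KT: "\<forall>r\<in>{0..t}. norm (T r) \<le> 1" using semigroup by (simp add: c0_contraction_semigroup_def)
  have Tc: "norm (T r) \<le> 1" if "0 \<le> r" for r using semigroup that by (simp add: c0_contraction_semigroup_def)
  have bpS': "blinfun_pow M (Suc k) = blinfun_pow M k o\<^sub>L M" for k
  proof -
    have "blinfun_pow M (k + 1) = blinfun_pow M k o\<^sub>L blinfun_pow M 1" by (rule bp_add)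
    moreover have "blinfun_pow M 1 = M" by (intro blinfun_eqI) (simp add: bp_Suc)
    ultimately show ?thesis by simp
  qed
  have convx: "norm (blinfun_pow M k z - P z) \<le> ct * \<delta> ^ k * norm z" if "k \<ge> 1" for k z
  proof -
    have "norm (blinfun_pow M k z - P z) = norm ((blinfun_pow M k - P) z)" by (simp add: blinfun.diff_left)
    also have "\<dots> \<le> ct * \<delta> ^ k * norm z" by (rule normK_le[OF conv[OF that]])
    finally show ?thesis .
  qed
  have Pn: "norm P \<le> 1"
  proof -
    have "norm P - 1 \<le> ct * \<delta> ^ n" if "n \<ge> 1" for n
    proof -
      have "norm P = norm (blinfun_pow M n - (blinfun_pow M n - P))" by simp
      also have "\<dots> \<le> norm (blinfun_pow M n) + norm (blinfun_pow M n - P)" by (rule norm_triangle_ineq4)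
      also have "\<dots> \<le> 1 + ct * \<delta> ^ n" using bp_norm[OF M_contr, of n] conv[OF that] by simp
      finally show ?thesis by simp
    qed
    then have "norm P - 1 \<le> 0" using \<delta> by (intro small_le[of "norm P - 1" ct \<delta>]) auto
    then show ?thesis by simp
  qed
  have MP: "M (P z) = P z" for z
  proof -
    have "norm (M (P z) - P z) \<le> (2 * ct * norm z) * \<delta> ^ n" if n: "n \<ge> 1" for n
    proof -
      have eq: "M (P z) - P z = (blinfun_pow M (Suc n) z - P z) - M (blinfun_pow M n z - P z)"
        by (simp add: bp_Suc blinfun.diff_right)
      have "norm (M (P z) - P z) \<le> norm (blinfun_pow M (Suc n) z - P z) + norm (M (blinfun_pow M n z - P z))"
        unfolding eq by (rule norm_triangle_ineq4)
      also have "\<dots> \<le> ct * \<delta> ^ Suc n * norm z + ct * \<delta> ^ n * norm z"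
        using convx[of "Suc n" z] convx[OF n, of z] normK_le[OF M_contr, of "blinfun_pow M n z - P z"] n
        by simp
      also have "\<dots> \<le> ct * \<delta> ^ n * norm z + ct * \<delta> ^ n * norm z"
      proof -
        have "\<delta> ^ Suc n \<le> \<delta> ^ n" using \<delta> by (simp add: power_decreasing_iff[symmetric] less_imp_le)
        then show ?thesis using ct by (intro add_mono mult_right_mono mult_left_mono) auto
      qed
      finally show ?thesis by (simp add: algebra_simps)
    qed
    then have "norm (M (P z) - P z) \<le> 0" using \<delta> by (intro small_le[of _ "2 * ct * norm z" \<delta>]) auto
    then show ?thesis by simp
  qed
  have PM: "P (M z) = P z" for z
  proof -
    have "norm (P (M z) - P z) \<le> (2 * ct * norm z) * \<delta> ^ n" if n: "n \<ge> 1" for n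
    proof -
      have eq: "P (M z) - P z = (blinfun_pow M (Suc n) z - P z) - (blinfun_pow M n (M z) - P (M z))"
        by (simp add: bpS')
      have "norm (P (M z) - P z) \<le> norm (blinfun_pow M (Suc n) z - P z) + norm (blinfun_pow M n (M z) - P (M z))"
        unfolding eq by (rule norm_triangle_ineq4)
      also have "\<dots> \<le> ct * \<delta> ^ Suc n * norm z + ct * \<delta> ^ n * norm (M z)"
        using convx[of "Suc n" z] convx[OF n, of "M z"] by simp
      also have "\<dots> \<le> ct * \<delta> ^ n * norm z + ct * \<delta> ^ n * norm z"
      proof -
        have "\<delta> ^ Suc n \<le> \<delta> ^ n" using \<delta> by (simp add: power_decreasing_iff[symmetric] less_imp_le)
        moreover have "norm (M z) \<le> norm z" by (rule normP_le[OF M_contr])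
        ultimately show ?thesis using ct \<delta> by (intro add_mono mult_right_mono mult_left_mono) auto
      qed
      finally show ?thesis by (simp add: algebra_simps)
    qed
    then have "norm (P (M z) - P z) \<le> 0" using \<delta> by (intro small_le[of _ "2 * ct * norm z" \<delta>]) auto
    then show ?thesis by simp
  qed
  have MkP: "blinfun_pow M k (P z) = P z" for k z
    by (induction k) (simp_all add: bp_Suc MP)
  have PMk: "P (blinfun_pow M k z) = P z" for k z
    by (induction k) (simp_all add: bp_Suc PM)
  obtain n0 :: nat where n0: "n0 \<ge> 1" "ct * \<delta> ^ n0 < 1"
  proof -
    have "(\<lambda>n. ct * \<delta> ^ n) \<longlonglongrightarrow> ct * 0"
      by (intro tendsto_mult tendsto_const LIMSEQ_power_zero) (use \<delta> in simp)
    then have "\<forall>\<^sub>F n in sequentially. ct * \<delta> ^ n < 1" by (simp add: order_tendstoD)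
    then obtain N where N: "\<And>n. n \<ge> N \<Longrightarrow> ct * \<delta> ^ n < 1" unfolding eventually_sequentially by blast
    show ?thesis by (rule that[of "max N 1"]) (use N in auto)
  qed
  define dt where "dt = ct * \<delta> ^ n0"
  have dt: "0 \<le> dt" "dt < 1" using n0 ct \<delta> by (auto simp: dt_def)
  define Mn where "Mn = blinfun_pow M n0"
  have MnR: "norm (Mn z - P z) \<le> dt * norm z" for z using convx[OF n0(1)] by (simp add: Mn_def dt_def)
  have MnP: "Mn (P z) = P z" for z by (simp add: Mn_def MkP)
  have PMn: "P (Mn z) = P z" for z by (simp add: Mn_def PMk)
  have Mnn: "norm Mn \<le> 1" unfolding Mn_def by (rule bp_norm[OF M_contr])
  obtain KS where KS: "1 \<le> KS" "\<forall>r\<in>{0..t}. norm (S r) \<le> KS" using sg_locbd[OF S_sg] by blast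
  define q where "q = dt / (1 - dt)"
  have q0: "0 \<le> q" using dt by (simp add: q_def)
  have qeq: "dt + dt * q = q" using dt by (simp add: q_def field_simps)
  define E1 where "E1 = KS * (KS + 5 + 4 * b + b ^ 2)"
  have E10: "0 \<le> E1" using KS b by (simp add: E1_def)
  define c where "c = t * b * (2 / (1 - dt) + t * b * q) + t ^ 2 * E1 + t * b * q + 1"
  have c0: "c > 0"
  proof -
    have "0 \<le> t * b * (2 / (1 - dt) + t * b * q)" using t b dt q0 by simp
    moreover have "0 \<le> t ^ 2 * E1" using E10 by simp
    moreover have "0 \<le> t * b * q" using t b q0 by simp
    ultimately show ?thesis by (simp add: c_def)
  qed
  have main: "norm (blinfun_apply (blinfun_pow (Mn o\<^sub>L T (t / real n)) n) x - S t (P x))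
      \<le> c / real n * (norm x + norm (L (P x)) + norm (L (P (L (P x))))) + dt ^ n * norm x"
    if n: "n \<ge> 1" and x: "P x \<in> D" "P (L (P x)) \<in> D" for n x
  proof -
    define s where "s = t / real n"
    have nr: "real n \<ge> 1" using n by simp
    have s0: "0 \<le> s" using t nr by (simp add: s_def)
    have ttn: "t * 1 \<le> t * real n" using mult_left_mono[OF nr t] .
    have st: "s \<le> t" using ttn nr by (simp add: s_def divide_le_eq)
    have ns: "real n * s = t" using nr by (simp add: s_def)
    have sI: "s \<in> {0..t}" using s0 st by simp
    define V where "V = Mn o\<^sub>L T s"
    define v where "v k = blinfun_pow V k x" for k
    define a where "a k = P (v k)" for k
    define r where "r k = v k - a k" for k
    have Vn: "norm V \<le> 1"
    proof -
      have "norm V \<le> norm Mn * norm (T s)" unfolding V_def by (rule norm_blinfun_compose)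
      also have "\<dots> \<le> 1" using Mnn Tc[OF s0] by (simp add: mult_le_one)
      finally show ?thesis .
    qed
    have vS: "v (Suc k) = Mn (T s (v k))" for k by (simp add: v_def V_def bp_Suc)
    have vn: "norm (v k) \<le> norm x" for k unfolding v_def by (rule normP_le[OF bp_norm[OF Vn]])
    have an: "norm (a k) \<le> norm x" for k unfolding a_def using normP_le[OF Pn, of "v k"] vn[of k] by linarith
    have Pa: "P (a k) = a k" for k by (simp add: a_def PP)
    have Pr: "P (r k) = 0" for k by (simp add: r_def a_def PP blinfun.diff_right)
    have vdec: "v k = a k + r k" for k by (simp add: r_def)
    have aS: "a (Suc k) = P (T s (a k)) + P (T s (r k))" for k
    proof -
      have "a (Suc k) = P (T s (v k))" by (simp add: a_def vS PMn)
      also have "\<dots> = P (T s (a k)) + P (T s (r k))" by (simp add: vdec blinfun.add_right)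
      finally show ?thesis .
    qed
    have rS: "r (Suc k) = (Mn (T s (a k)) - P (T s (a k))) + (Mn (T s (r k)) - P (T s (r k)))" for k
    proof -
      have "r (Suc k) = Mn (T s (v k)) - P (T s (v k))" by (simp add: r_def a_def vS PMn)
      also have "\<dots> = (Mn (T s (a k)) - P (T s (a k))) + (Mn (T s (r k)) - P (T s (r k)))"
        by (simp add: vdec blinfun.add_right algebra_simps)
      finally show ?thesis .
    qed
    have leakA: "norm (Mn (T s (a k)) - P (T s (a k))) \<le> dt * (s * b * norm x)" for k
    proof -
      define u where "u = T s (a k)"
      define w where "w = u - P u"
      have e1: "Mn u - P u = Mn w - P w" by (simp add: w_def blinfun.diff_right MnP PP)
      have e2: "w = ((id_blinfun - P) o\<^sub>L T s o\<^sub>L P) (a k)" by (simp add: w_def u_def Pa blinfun.diff_left)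
      have "norm w \<le> (s * b) * norm (a k)" unfolding e2 by (rule normK_le[OF leak2[OF s0]])
      also have "\<dots> \<le> (s * b) * norm x" using an[of k] s0 b by (intro mult_left_mono) auto
      finally have nw: "norm w \<le> s * b * norm x" .
      have "norm (Mn u - P u) \<le> dt * norm w" unfolding e1 by (rule MnR)
      also have "\<dots> \<le> dt * (s * b * norm x)" using nw dt by (intro mult_left_mono) auto
      finally show ?thesis by (simp add: u_def)
    qed
    have leakR: "norm (Mn (T s (r k)) - P (T s (r k))) \<le> dt * norm (r k)" for k
    proof -
      have "norm (Mn (T s (r k)) - P (T s (r k))) \<le> dt * norm (T s (r k))" by (rule MnR)
      also have "\<dots> \<le> dt * norm (r k)" using normP_le[OF Tc[OF s0]] dt by (intro mult_left_mono) auto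
      finally show ?thesis .
    qed
    have leakP: "norm (P (T s (r k))) \<le> s * b * norm (r k)" for k
    proof -
      have "P (T s (r k)) = (P o\<^sub>L T s o\<^sub>L (id_blinfun - P)) (r k)" by (simp add: Pr blinfun.diff_left)
      also have "norm \<dots> \<le> (s * b) * norm (r k)" by (rule normK_le[OF leak1[OF s0]])
      finally show ?thesis by simp
    qed
    have r1: "norm (r k) \<le> dt ^ k * norm x + s * b * q * norm x" if "k \<ge> 1" for k
      using that
    proof (induction k rule: dec_induct)
      case base
      have "r 1 = Mn (T s x) - P (T s x)" by (simp add: r_def a_def v_def V_def bp_Suc PMn)
      then have "norm (r 1) \<le> dt * norm (T s x)" using MnR by simp
      also have "\<dots> \<le> dt * norm x" using normP_le[OF Tc[OF s0]] dt by (intro mult_left_mono) auto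
      finally have "norm (r 1) \<le> dt * norm x" .
      moreover have "0 \<le> s * b * q * norm x" using s0 b q0 by simp
      ultimately show ?case by simp
    next
      case (step k)
      have "norm (r (Suc k)) \<le> dt * (s * b * norm x) + dt * norm (r k)"
        unfolding rS using leakA[of k] leakR[of k] norm_triangle_ineq[of "Mn (T s (a k)) - P (T s (a k))" "Mn (T s (r k)) - P (T s (r k))"]
        by linarith
      also have "\<dots> \<le> dt * (s * b * norm x) + dt * (dt ^ k * norm x + s * b * q * norm x)"
        using step.IH dt by (intro add_left_mono mult_left_mono) auto
      also have "\<dots> = dt ^ Suc k * norm x + s * b * norm x * (dt + dt * q)" by (simp add: algebra_simps)
      also have "\<dots> = dt ^ Suc k * norm x + s * b * q * norm x" by (simp add: qeq)
      finally show ?case .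
    qed
    have r0: "norm (r 0) \<le> 2 * norm x"
    proof -
      have "norm (r 0) \<le> norm x + norm (P x)" unfolding r_def a_def v_def by (simp add: norm_triangle_ineq4)
      then show ?thesis using normP_le[OF Pn, of x] by linarith
    qed
    have rall: "norm (r k) \<le> 2 * dt ^ k * norm x + s * b * q * norm x" for k
    proof (cases "k = 0")
      case True
      have "0 \<le> s * b * q * norm x" using s0 b q0 by simp
      then show ?thesis using r0 True by simp
    next
      case False
      then have "norm (r k) \<le> dt ^ k * norm x + s * b * q * norm x" using r1 by simp
      moreover have "dt ^ k * norm x \<le> 2 * dt ^ k * norm x" using dt by simp
      ultimately show ?thesis by linarith
    qed
    have geo: "(\<Sum>k<n. dt ^ k) \<le> 1 / (1 - dt)"
    proof -
      have "(\<Sum>k<n. dt ^ k) = (1 - dt ^ n) / (1 - dt)" using dt by (simp add: sum_gp_strict)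
      also have "\<dots> \<le> 1 / (1 - dt)" using dt by (simp add: divide_right_mono)
      finally show ?thesis .
    qed
    have rsum: "(\<Sum>k<n. norm (r k)) \<le> 2 * norm x / (1 - dt) + t * b * q * norm x"
    proof -
      have "(\<Sum>k<n. norm (r k)) \<le> (\<Sum>k<n. 2 * norm x * dt ^ k + s * b * q * norm x)"
        using rall by (intro sum_mono) (simp add: algebra_simps)
      also have "\<dots> = 2 * norm x * (\<Sum>k<n. dt ^ k) + real n * (s * b * q * norm x)"
        by (simp add: sum.distrib sum_distrib_left)
      also have "\<dots> \<le> 2 * norm x * (1 / (1 - dt)) + real n * (s * b * q * norm x)"
        using geo by (intro add_right_mono mult_left_mono) auto
      also have "real n * (s * b * q * norm x) = t * b * q * norm x" using ns by (simp add: algebra_simps)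
      finally show ?thesis by simp
    qed
    define W where "W z = P (T s (P z))" for z
    define w where "w k = (W ^^ k) (P x)" for k
    have Wlip: "norm (W z - W z') \<le> norm (z - z')" for z z'
    proof -
      have "W z - W z' = P (T s (P (z - z')))" by (simp add: W_def blinfun.diff_right)
      also have "norm \<dots> \<le> norm (T s (P (z - z')))" by (rule normP_le[OF Pn])
      also have "\<dots> \<le> norm (P (z - z'))" by (rule normP_le[OF Tc[OF s0]])
      also have "\<dots> \<le> norm (z - z')" by (rule normP_le[OF Pn])
      finally show ?thesis .
    qed
    have aw: "norm (a k - w k) \<le> s * b * (\<Sum>j<k. norm (r j))" for k
    proof (induction k)
      case 0
      show ?case by (simp add: a_def v_def w_def)
    next
      case (Suc k)
      have eq: "a (Suc k) - w (Suc k) = (W (a k) - W (w k)) + P (T s (r k))"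
        by (simp add: aS w_def W_def Pa)
      have "norm (a (Suc k) - w (Suc k)) \<le> norm (a k - w k) + s * b * norm (r k)"
        unfolding eq using Wlip[of "a k" "w k"] leakP[of k] norm_triangle_ineq[of "W (a k) - W (w k)" "P (T s (r k))"]
        by linarith
      also have "\<dots> \<le> s * b * (\<Sum>j<k. norm (r j)) + s * b * norm (r k)" using Suc.IH by simp
      also have "\<dots> = s * b * (\<Sum>j<Suc k. norm (r j))" by (simp add: algebra_simps)
      finally show ?case .
    qed
    define y where "y k = S (real k * s) (P x)" for k
    define Nx where "Nx = norm x + norm (L (P x)) + norm (L (P (L (P x))))"
    have Nx0: "norm x \<le> Nx" by (simp add: Nx_def)
    have step1: "norm (W (y j) - S s (y j)) \<le> s * s * (E1 * Nx)" if j: "j < n" for j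
    proof -
      have rj: "real j * s \<in> {0..t}"
      proof -
        have "real j * s \<le> real n * s" using j s0 by (intro mult_right_mono) auto
        then show ?thesis using ns s0 by simp
      qed
      have "norm (P (T s (P (S (real j * s) (P x)))) - S s (S (real j * s) (P x)))
          \<le> s * s * (KS * (KS + 5 + 4 * b + b ^ 2) * (norm x + norm (L (P x)) + norm (L (P (L (P x))))))"
        by (rule chern_step[OF T KT gen Pn PP leak1 leak2 b S_sg S_gen KS x rj sI])
      then show ?thesis by (simp add: W_def y_def E1_def Nx_def mult.assoc)
    qed
    have wy: "norm (w k - y k) \<le> real k * (s * s * (E1 * Nx))" if "k \<le> n" for k
      using that
    proof (induction k)
      case 0
      show ?case by (simp add: w_def y_def sg_zero[OF S_sg])
    next
      case (Suc k)
      have ySuc: "y (Suc k) = S s (y k)"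
      proof -
        have "S s (y k) = S (s + real k * s) (P x)" unfolding y_def using s0 by (intro sg_law[OF S_sg]) auto
        then show ?thesis by (simp add: y_def algebra_simps)
      qed
      have eq: "w (Suc k) - y (Suc k) = (W (w k) - W (y k)) + (W (y k) - S s (y k))"
        by (simp add: ySuc w_def)
      have "norm (w (Suc k) - y (Suc k)) \<le> norm (w k - y k) + s * s * (E1 * Nx)"
        unfolding eq using Wlip[of "w k" "y k"] step1[of k] Suc.prems norm_triangle_ineq[of "W (w k) - W (y k)" "W (y k) - S s (y k)"]
        by linarith
      also have "\<dots> \<le> real k * (s * s * (E1 * Nx)) + s * s * (E1 * Nx)" using Suc by simp
      also have "\<dots> = real (Suc k) * (s * s * (E1 * Nx))" by (simp add: algebra_simps)
      finally show ?case .
    qed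
    have yn: "y n = S t (P x)" by (simp add: y_def ns)
    have vn_eq: "blinfun_apply (blinfun_pow (Mn o\<^sub>L T (t / real n)) n) x = v n" by (simp add: v_def V_def s_def)
    have tri: "norm (v n - S t (P x)) \<le> norm (a n - w n) + norm (w n - y n) + norm (r n)"
    proof -
      have e: "v n - S t (P x) = ((a n - w n) + (w n - y n)) + r n" by (simp add: vdec yn)
      show ?thesis unfolding e
        using norm_triangle_ineq[of "(a n - w n) + (w n - y n)" "r n"] norm_triangle_ineq[of "a n - w n" "w n - y n"]
        by linarith
    qed
    define X where "X = (2 / (1 - dt) + t * b * q) * norm x"
    have Xeq: "2 * norm x / (1 - dt) + t * b * q * norm x = X" by (simp add: X_def algebra_simps)
    have sb0: "0 \<le> s * b" using s0 b by simp
    have b1: "norm (a n - w n) \<le> s * b * X"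
    proof -
      have "s * b * (\<Sum>j<n. norm (r j)) \<le> s * b * (2 * norm x / (1 - dt) + t * b * q * norm x)"
        by (rule mult_left_mono[OF rsum sb0])
      then show ?thesis using aw[of n] Xeq by simp
    qed
    have b2: "norm (w n - y n) \<le> real n * (s * s * (E1 * Nx))" using wy by simp
    have b3: "norm (r n) \<le> dt ^ n * norm x + s * b * q * norm x" using r1 n by simp
    have sn: "s = t / real n" by (simp add: s_def)
    have nr0: "real n \<noteq> 0" using nr by simp
    have p1: "s * b * X = (t * b * X) / real n" by (simp add: sn)
    have p2: "real n * (s * s * (E1 * Nx)) = (t ^ 2 * E1 * Nx) / real n"
      using nr0 by (simp add: sn power2_eq_square)
    have p3: "s * b * q * norm x = (t * b * q * norm x) / real n" by (simp add: sn)
    have "norm (v n - S t (P x)) \<le> s * b * X + real n * (s * s * (E1 * Nx)) + (dt ^ n * norm x + s * b * q * norm x)"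
      using tri b1 b2 b3 by linarith
    also have "\<dots> = (t * b * X + t ^ 2 * E1 * Nx + t * b * q * norm x) / real n + dt ^ n * norm x"
      unfolding p1 p2 p3 by (simp add: add_divide_distrib)
    also have "\<dots> \<le> c / real n * Nx + dt ^ n * norm x"
    proof -
      have "t * b * X + t ^ 2 * E1 * Nx + t * b * q * norm x
          \<le> t * b * (2 / (1 - dt) + t * b * q) * Nx + t ^ 2 * E1 * Nx + t * b * q * Nx + 1 * Nx"
      proof -
        have h0: "0 \<le> t * b * (2 / (1 - dt) + t * b * q)" using t b dt q0 by simp
        have "t * b * (2 / (1 - dt) + t * b * q) * norm x \<le> t * b * (2 / (1 - dt) + t * b * q) * Nx"
          by (rule mult_left_mono[OF Nx0 h0])
        moreover have "t * b * X = t * b * (2 / (1 - dt) + t * b * q) * norm x" by (simp add: X_def)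
        moreover have "t * b * q * norm x \<le> t * b * q * Nx" using Nx0 t b q0 by (intro mult_left_mono) auto
        moreover have "0 \<le> Nx" using Nx0 norm_ge_zero[of x] by linarith
        ultimately show ?thesis by linarith
      qed
      also have "\<dots> = c * Nx" by (simp add: c_def algebra_simps)
      finally have "(t * b * X + t ^ 2 * E1 * Nx + t * b * q * norm x) / real n \<le> c * Nx / real n"
        using nr by (simp add: divide_right_mono)
      then show ?thesis by simp
    qed
    finally show ?thesis unfolding vn_eq Nx_def .
  qed
  show ?thesis
    using c0 n0 main unfolding dt_def Mn_def by blast
qed

end
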